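(* Let $\beta\colon[0,\infty)\to(0,1)$ be continuous and let $D$ be the multistable subordinator with index $\beta$ (defined in the context). Then the sample paths of $D$ are almost surely strictly increasing.
   Context: Let $\beta\colon[0,\infty)\to(0,1)$ be a continuous function. Let $\Pi=\{(t_i,x_i)\}$ be a Poisson point process on $[0,\infty)\times(0,\infty)$ with intensity measure $\nu(dt,dx)=\beta(t)x^{-\beta(t)-1}\,dt\,dx$. The multistable subordinator with index $\beta$ is the process $D(t)=\sum_{(t_i,x_i)\in\Pi,\ t_i\le t}x_i$, $t\ge0$ (this sum is a.s. finite since $\int_0^t(1-\beta(s))^{-1}ds<\infty$). *)

theory Defs
  imports "HOL-Probability.Probability"
begin

definition point_count :: "('w \<Rightarrow> (real \<times> real) set) \<Rightarrow> (real \<times> real) set \<Rightarrow> 'w \<Rightarrow> ennreal" where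
  "point_count P A \<omega> = emeasure (count_space UNIV) (P \<omega> \<inter> A)"

definition poisson_point_process ::
  "'w measure \<Rightarrow> (real \<times> real) measure \<Rightarrow> ('w \<Rightarrow> (real \<times> real) set) \<Rightarrow> bool" where
  "poisson_point_process M \<nu> P \<longleftrightarrow>
     prob_space M \<and> sets \<nu> = sets lborel \<and>
     (\<forall>A\<in>sets lborel. point_count P A \<in> borel_measurable M) \<and>
     (\<forall>A\<in>sets lborel. emeasure \<nu> A < \<infinity> \<longrightarrow>
        (\<forall>k::nat. measure M {\<omega>\<in>space M. point_count P A \<omega> = of_nat k}
                 = exp (- measure \<nu> A) * measure \<nu> A ^ k / fact k)) \<and>
     (\<forall>A\<in>sets lborel. emeasure \<nu> A = \<infinity> \<longrightarrow>
        (AE \<omega> in M. point_count P A \<omega> = \<infinity>)) \<and>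
     (\<forall>(I::nat set) A. finite I \<longrightarrow> A ` I \<subseteq> sets lborel \<longrightarrow> disjoint_family_on A I \<longrightarrow>
        prob_space.indep_vars M (\<lambda>_. borel) (\<lambda>i. point_count P (A i)) I)"

definition multistable_intensity :: "(real \<Rightarrow> real) \<Rightarrow> (real \<times> real) measure" where
  "multistable_intensity \<beta> = density lborel
     (\<lambda>(t, x). if 0 \<le> t \<and> 0 < x then ennreal (\<beta> t * x powr (- \<beta> t - 1)) else 0)"

definition multistable_subordinator ::
  "('w \<Rightarrow> (real \<times> real) set) \<Rightarrow> real \<Rightarrow> 'w \<Rightarrow> ennreal" where
  "multistable_subordinator P t \<omega> = (\<Sum>\<^sub>\<infinity> p\<in>{p\<in>P \<omega>. fst p \<le> t}. ennreal (snd p))"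

end

theory Submission
  imports Defs
begin

lemma exp_ser: "(\<lambda>k. exp (-l) * l^k / fact k) sums (1::real)"
proof -
  have "(\<lambda>n. l^n / fact n) sums exp l"
    using exp_converges[of l] by (simp add: divide_inverse mult.commute scaleR_conv_of_real)
  from sums_mult[OF this, of "exp (-l)"] show ?thesis
    by (simp add: exp_minus field_simps)
qed

lemma exp_ser2: "(\<lambda>k. real k * (exp (-l) * l^k / fact k)) sums (l::real)"
proof -
  have "(\<lambda>k. l * (exp (-l) * l^k / fact k)) sums (l * 1)"
    by (rule sums_mult[OF exp_ser])
  moreover have "(\<lambda>k. real (Suc k) * (exp (-l) * l^(Suc k) / fact (Suc k))) = (\<lambda>k. l * (exp (-l) * l^k / fact k))"
  proof
    fix k
    have "fact (Suc k) = (real (Suc k)) * fact k" by (simp del: of_nat_Suc)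
    then show "real (Suc k) * (exp (-l) * l^(Suc k) / fact (Suc k)) = l * (exp (-l) * l^k / fact k)"
      by (simp del: of_nat_Suc add: field_simps)
  qed
  ultimately have "(\<lambda>k. real (Suc k) * (exp (-l) * l^(Suc k) / fact (Suc k))) sums l" by simp
  from sums_Suc[OF this] show ?thesis by simp
qed

lemma poisson_nn_integral:
  fixes N :: "'w \<Rightarrow> ennreal"
  assumes "prob_space M" and Nm[measurable]: "N \<in> borel_measurable M" and "0 \<le> l"
    and pk: "\<And>k::nat. measure M {\<omega>\<in>space M. N \<omega> = of_nat k} = exp(-l) * l^k / fact k"
  shows "(\<integral>\<^sup>+\<omega>. N \<omega> \<partial>M) = ennreal l" and "AE \<omega> in M. N \<omega> < \<infinity>"
proof -
  interpret prob_space M by fact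
  define E where "E k = {\<omega>\<in>space M. N \<omega> = of_nat k}" for k :: nat
  have Em[measurable]: "E k \<in> sets M" for k unfolding E_def by measurable
  have dj: "disjoint_family E" by (auto simp: disjoint_family_on_def E_def)
  have "(\<lambda>k. measure M (E k)) sums measure M (\<Union>k. E k)"
    by (rule measure_UNION) (use Em dj in auto)
  hence "(\<lambda>k. exp (-l) * l^k / fact k) sums measure M (\<Union>k. E k)"
    using pk by (simp add: E_def)
  hence "measure M (\<Union>k. E k) = 1" using exp_ser sums_unique2 by blast
  hence AEE: "AE \<omega> in M. \<omega> \<in> (\<Union>k. E k)" by (rule AE_prob_1)
  then show "AE \<omega> in M. N \<omega> < \<infinity>"
    by eventually_elim (auto simp: E_def of_nat_less_top)
  have "(\<integral>\<^sup>+\<omega>. N \<omega> \<partial>M) = (\<integral>\<^sup>+\<omega>. (\<Sum>k. of_nat k * indicator (E k) \<omega>) \<partial>M)"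
  proof (rule nn_integral_cong_AE)
    show "AE \<omega> in M. N \<omega> = (\<Sum>k. of_nat k * indicator (E k) \<omega>)"
      using AEE
    proof eventually_elim
      case (elim \<omega>)
      then obtain k where k: "\<omega> \<in> E k" by auto
      have "(\<Sum>j. (of_nat j * indicator (E j) \<omega> :: ennreal)) = (\<Sum>j\<in>{k}. of_nat j * indicator (E j) \<omega>)"
      proof (rule suminf_finite)
        show "j \<notin> {k} \<Longrightarrow> of_nat j * indicator (E j) \<omega> = (0::ennreal)" for j
        proof -
          assume "j \<notin> {k}"
          hence "\<omega> \<notin> E j" using k unfolding E_def by (auto simp: of_nat_eq_iff)
          thus ?thesis by simp
        qed
      qed simp
      moreover have "N \<omega> = of_nat k" using k by (simp add: E_def)
      ultimately show ?case using k by simp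
    qed
  qed
  also have "\<dots> = (\<Sum>k. \<integral>\<^sup>+\<omega>. of_nat k * indicator (E k) \<omega> \<partial>M)"
    by (rule nn_integral_suminf) measurable
  also have "\<dots> = (\<Sum>k. ennreal (real k) * ennreal (exp (-l) * l^k / fact k))"
    by (simp add: nn_integral_cmult_indicator emeasure_eq_measure E_def[symmetric] pk[folded E_def]
        ennreal_of_nat_eq_real_of_nat)
  also have "\<dots> = (\<Sum>k. ennreal (real k * (exp (-l) * l^k / fact k)))"
    using \<open>0 \<le> l\<close> by (intro suminf_cong) (simp add: ennreal_mult[symmetric] times_divide_eq_right del: times_divide_eq_right)
  also have "\<dots> = ennreal l"
    using exp_ser2[of l] \<open>0 \<le> l\<close> by (subst suminf_ennreal2) (auto simp: sums_iff)
  finally show "(\<integral>\<^sup>+\<omega>. N \<omega> \<partial>M) = ennreal l" .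
qed



definition fb :: "(real \<Rightarrow> real) \<Rightarrow> real \<times> real \<Rightarrow> ennreal" where
  "fb \<beta> p = (if 0 \<le> fst p \<and> 0 < snd p then ennreal (\<beta> (fst p) * snd p powr (- \<beta> (fst p) - 1)) else 0)"

lemma intensity_eq: "multistable_intensity \<beta> = density lborel (fb \<beta>)"
  unfolding multistable_intensity_def fb_def by (rule arg_cong[where f="density lborel"]) (auto simp: fun_eq_iff)

lemma fb_measurable:
  assumes "continuous_on {0..} \<beta>"
  shows "fb \<beta> \<in> borel_measurable lborel"
proof -
  define \<beta>0 where "\<beta>0 t = (if t \<in> {0..} then \<beta> t else 0)" for t :: real
  have [measurable]: "\<beta>0 \<in> borel_measurable borel"
    unfolding \<beta>0_def by (rule borel_measurable_continuous_on_if) (use assms in auto)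
  have "fb \<beta> = (\<lambda>p. if 0 \<le> fst p \<and> 0 < snd p then ennreal (\<beta>0 (fst p) * snd p powr (- \<beta>0 (fst p) - 1)) else 0)"
    by (auto simp: fun_eq_iff fb_def \<beta>0_def)
  also have "\<dots> \<in> borel_measurable (borel \<Otimes>\<^sub>M borel)" by measurable
  also have "borel_measurable (borel \<Otimes>\<^sub>M borel) = borel_measurable (lborel :: (real \<times> real) measure)"
    by (simp add: borel_prod)
  finally show ?thesis .
qed

lemma box_sets: "A \<in> sets borel \<Longrightarrow> B \<in> sets borel \<Longrightarrow> A \<times> B \<in> sets (lborel :: (real \<times> real) measure)"
  by (metis lborel_prod pair_measureI sets_lborel)

lemma lborel_box: "A \<in> sets borel \<Longrightarrow> B \<in> sets borel \<Longrightarrow>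
   emeasure (lborel :: (real \<times> real) measure) (A \<times> B) = emeasure lborel A * emeasure lborel B"
  by (metis lborel.emeasure_pair_measure_Times lborel_prod sets_lborel)

lemma nu_eq:
  assumes "continuous_on {0..} \<beta>" "S \<in> sets lborel"
  shows "emeasure (multistable_intensity \<beta>) S = (\<integral>\<^sup>+p. fb \<beta> p * indicator S p \<partial>lborel)"
  unfolding intensity_eq by (rule emeasure_density[OF fb_measurable]) (use assms in auto)

lemma nu_le:
  assumes "continuous_on {0..} \<beta>" "S \<in> sets lborel" "\<And>p. p \<in> S \<Longrightarrow> fb \<beta> p \<le> ennreal C"
  shows "emeasure (multistable_intensity \<beta>) S \<le> ennreal C * emeasure lborel S"
proof -
  have "emeasure (multistable_intensity \<beta>) S \<le> (\<integral>\<^sup>+p. ennreal C * indicator S p \<partial>lborel)"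
    unfolding nu_eq[OF assms(1,2)] by (rule nn_integral_mono) (auto simp: assms(3) split: split_indicator)
  also have "\<dots> = ennreal C * emeasure lborel S" using assms(2) by (simp add: nn_integral_cmult_indicator)
  finally show ?thesis .
qed

lemma nu_ge:
  assumes "continuous_on {0..} \<beta>" "S \<in> sets lborel" "\<And>p. p \<in> S \<Longrightarrow> ennreal C \<le> fb \<beta> p"
  shows "ennreal C * emeasure lborel S \<le> emeasure (multistable_intensity \<beta>) S"
proof -
  have "ennreal C * emeasure lborel S = (\<integral>\<^sup>+p. ennreal C * indicator S p \<partial>lborel)"
    using assms(2) by (simp add: nn_integral_cmult_indicator)
  also have "\<dots> \<le> emeasure (multistable_intensity \<beta>) S"
    unfolding nu_eq[OF assms(1,2)] by (rule nn_integral_mono) (auto simp: assms(3) split: split_indicator)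
  finally show ?thesis .
qed



lemma powr_pow_eq: assumes "0 < (y::real)" shows "(y^k) powr e = (y powr e)^k"
proof -
  have "(y^k) powr e = (y powr real k) powr e" using assms by (simp add: powr_realpow)
  also have "\<dots> = (y powr e) powr real k" by (simp add: powr_powr mult.commute)
  also have "\<dots> = (y powr e)^k" using assms by (simp add: powr_realpow)
  finally show ?thesis .
qed


lemma shells_disj: "disjoint_family (\<lambda>k::nat. {((1::real)/2)^Suc k <.. (1/2)^k})"
proof (unfold disjoint_family_on_def, intro ballI impI)
  fix m n :: nat assume "m \<noteq> n"
  have *: "{((1::real)/2)^Suc m <.. (1/2)^m} \<inter> {(1/2)^Suc n <.. (1/2)^n} = {}" if "m < n" for m n :: nat
  proof -
    have "((1::real)/2)^n \<le> (1/2)^Suc m" using that by (intro power_decreasing) auto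
    thus ?thesis by auto
  qed
  show "{((1::real)/2)^Suc m <.. (1/2)^m} \<inter> {(1/2)^Suc n <.. (1/2)^n} = {}"
    using *[of m n] *[of n m] \<open>m \<noteq> n\<close> by (cases "m < n") (auto simp: Int_commute)
qed

lemma nu_inf:
  assumes cont: "continuous_on {0..} \<beta>" and rng: "\<forall>t\<ge>0. 0 < \<beta> t \<and> \<beta> t < 1"
    and q: "0 \<le> q1" "q1 < q2"
  shows "emeasure (multistable_intensity \<beta>) ({q1<..q2} \<times> {0<..}) = \<infinity>"
proof -
  obtain t0 where t0: "t0 \<in> {q1..q2}" "\<forall>t\<in>{q1..q2}. \<beta> t0 \<le> \<beta> t"
    using continuous_attains_inf[OF compact_Icc _ continuous_on_subset[OF cont], of q1 q2] q by auto
  define a where "a = \<beta> t0"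
  have a: "0 < a" using t0 q rng by (auto simp: a_def)
  define S where "S k = {q1<..q2} \<times> {((1::real)/2)^Suc k <.. (1/2)^k}" for k :: nat
  define c where "c = a * (q2 - q1) / 2"
  have c: "0 < c" using a q by (simp add: c_def)
  have Ssets: "S k \<in> sets lborel" for k unfolding S_def by (intro box_sets) auto
  have ge: "ennreal c \<le> emeasure (multistable_intensity \<beta>) (S k)" for k
  proof -
    have "ennreal (a * 2^k) * emeasure lborel (S k) \<le> emeasure (multistable_intensity \<beta>) (S k)"
    proof (rule nu_ge[OF cont Ssets])
      fix p assume "p \<in> S k"
      then obtain t x where p: "p = (t, x)" "q1 < t" "t \<le> q2" "(1/2)^Suc k < x" "x \<le> (1/2)^k"
        unfolding S_def by auto
      have "0 < ((1::real)/2)^Suc k" by simp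
      hence x0: "0 < x" using p(4) by linarith
      have "((1::real)/2)^k \<le> 1" by (intro power_le_one) auto
      hence x1: "x \<le> 1" using p(5) by linarith
      have bt: "a \<le> \<beta> t" "0 < \<beta> t" using t0 p q rng by (auto simp: a_def)
      have "x powr (-1) \<le> x powr (- \<beta> t - 1)" using bt x0 x1 by (intro powr_mono') auto
      moreover have "x powr (-1) = 1 / x" using x0 by (simp add: powr_minus_divide)
      moreover have "(2::real)^k \<le> 1 / x"
      proof -
        have "x * 2^k \<le> (1/2)^k * 2^k" using p(5) by (intro mult_right_mono) auto
        also have "\<dots> = 1" by (simp add: power_mult_distrib[symmetric])
        finally show ?thesis using x0 by (simp add: field_simps)
      qed
      ultimately have "2^k \<le> x powr (- \<beta> t - 1)" by linarith
      hence "a * 2^k \<le> \<beta> t * x powr (- \<beta> t - 1)" using bt by (intro mult_mono) auto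
      thus "ennreal (a * 2^k) \<le> fb \<beta> p" using p q x0 by (auto simp: fb_def intro: ennreal_leI)
    qed
    moreover have "emeasure lborel (S k) = ennreal ((q2 - q1) * (1/2)^Suc k)"
    proof -
      have "((1::real)/2)^Suc k \<le> (1/2)^k" by (intro power_decreasing) auto
      then show ?thesis
        unfolding S_def using q by (subst lborel_box) (auto simp: ennreal_mult[symmetric])
    qed
    moreover have "a * 2^k * ((q2 - q1) * (1/2)^Suc k) = c"
      by (simp add: c_def field_simps power_mult_distrib[symmetric])
    ultimately show ?thesis using a q by (simp add: ennreal_mult[symmetric])
  qed
  have inf: "(\<Sum>k. ennreal c) = \<top>"
    using c by (intro summable_iff_suminf_neq_top) (auto simp: summable_const_iff)
  have "\<top> \<le> (\<Sum>k. emeasure (multistable_intensity \<beta>) (S k))"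
    unfolding inf[symmetric] by (intro suminf_le ge summableI)
  also have "\<dots> = emeasure (multistable_intensity \<beta>) (\<Union>k. S k)"
  proof (rule suminf_emeasure)
    show "range S \<subseteq> sets (multistable_intensity \<beta>)" using Ssets by (auto simp: intensity_eq)
    show "disjoint_family S" unfolding disjoint_family_on_def
    proof (intro ballI impI)
      fix m n :: nat assume "m \<noteq> n"
      hence "{((1::real)/2)^Suc m <.. (1/2)^m} \<inter> {(1/2)^Suc n <.. (1/2)^n} = {}"
        using disjoint_family_onD[OF shells_disj] by blast
      thus "S m \<inter> S n = {}" unfolding S_def by blast
    qed
  qed
  also have "\<dots> \<le> emeasure (multistable_intensity \<beta>) ({q1<..q2} \<times> {0<..})"
  proof (rule emeasure_mono)
    show "(\<Union>k. S k) \<subseteq> {q1<..q2} \<times> {0<..}"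
    proof
      fix p assume "p \<in> (\<Union>k. S k)"
      then obtain k where "p \<in> S k" by blast
      moreover have "((1::real)/2)^Suc k > 0" by simp
      ultimately show "p \<in> {q1<..q2} \<times> {0<..}" unfolding S_def mem_Times_iff
        by (metis greaterThanAtMost_iff greaterThan_iff order_less_trans)
    qed
    show "{q1<..q2} \<times> {0::real<..} \<in> sets (multistable_intensity \<beta>)"
      unfolding intensity_eq sets_density by (intro box_sets) auto
  qed
  finally show ?thesis unfolding infinity_ennreal_def by (rule top_unique[THEN iffD1])
qed



lemma up_shell_cover:
  assumes "1 < (x::real)" shows "\<exists>k::nat. 2^k < x \<and> x \<le> 2^Suc k"
proof -
  obtain n :: nat where n: "x < 2^n" using real_arch_pow[of 2 x] by auto
  define m where "m = (LEAST m::nat. x \<le> 2^m)"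
  have m1: "x \<le> 2^m" unfolding m_def by (rule LeastI[of _ n]) (use n in simp)
  have m0: "m \<noteq> 0"
  proof
    assume "m = 0" thus False using m1 assms by simp
  qed
  then obtain k where k: "m = Suc k" by (cases m) auto
  have "\<not> x \<le> 2^k" using not_less_Least[of k "\<lambda>m. x \<le> (2::real)^m"] k unfolding m_def by auto
  hence "2^k < x" by simp
  moreover have "x \<le> 2^Suc k" using m1 k by simp
  ultimately show ?thesis by blast
qed

lemma nu_up_fin:
  assumes cont: "continuous_on {0..} \<beta>" and rng: "\<forall>t\<ge>0. 0 < \<beta> t \<and> \<beta> t < 1" and T: "0 \<le> T"
  shows "emeasure (multistable_intensity \<beta>) ({0..T} \<times> {1<..}) < \<infinity>"
proof -
  obtain t0 where t0: "t0 \<in> {0..T}" "\<forall>t\<in>{0..T}. \<beta> t0 \<le> \<beta> t"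
    using continuous_attains_inf[OF compact_Icc _ continuous_on_subset[OF cont], of 0 T] T by auto
  define a where "a = \<beta> t0"
  have a: "0 < a" using t0 T rng by (auto simp: a_def)
  define r where "r = (2::real) powr (-a)"
  have r: "0 < r" "r < 1" using a by (auto simp: r_def intro: powr_less_one)
  define R where "R k = {0..T} \<times> {(2::real)^k <.. 2^Suc k}" for k :: nat
  have Rsets: "R k \<in> sets lborel" for k unfolding R_def by (intro box_sets) auto
  have le: "emeasure (multistable_intensity \<beta>) (R k) \<le> ennreal (T * r^k)" for k
  proof -
    define C where "C = ((2::real)^k) powr (-a-1)"
    have "emeasure (multistable_intensity \<beta>) (R k) \<le> ennreal C * emeasure lborel (R k)"
    proof (rule nu_le[OF cont Rsets])
      fix p assume "p \<in> R k"
      then obtain t x where p: "p = (t, x)" "0 \<le> t" "t \<le> T" "2^k < x" "x \<le> 2^Suc k"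
        unfolding R_def by auto
      have "(1::real) \<le> 2^k" by simp
      hence x1: "1 \<le> x" using p(4) by linarith
      have bt: "a \<le> \<beta> t" "0 < \<beta> t" "\<beta> t < 1" using t0 p rng by (auto simp: a_def)
      have "\<beta> t * x powr (- \<beta> t - 1) \<le> 1 * x powr (- \<beta> t - 1)"
        using bt by (intro mult_right_mono) auto
      also have "\<dots> \<le> x powr (-a-1)" using bt x1 by (simp add: powr_mono)
      also have "\<dots> \<le> C" unfolding C_def using a p(4) by (intro powr_mono2') auto
      finally show "fb \<beta> p \<le> ennreal C" using p by (auto simp: fb_def intro: ennreal_leI)
    qed
    also have "emeasure lborel (R k) = ennreal (T * 2^k)"
      unfolding R_def using T by (subst lborel_box) (auto simp: ennreal_mult[symmetric])
    also have "ennreal C * ennreal (T * 2^k) = ennreal (C * (T * 2^k))"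
      by (simp add: C_def ennreal_mult[symmetric] T)
    also have "C * (T * 2^k) = T * r^k"
    proof -
      have "C = ((2::real)^k) powr ((-a) + (-1))" unfolding C_def by simp
      also have "\<dots> = ((2::real)^k) powr (-a) * ((2::real)^k) powr (-1)" by (rule powr_add)
      also have "((2::real)^k) powr (-1) = 1 / 2^k" by (simp add: powr_minus_divide)
      also have "((2::real)^k) powr (-a) = r^k" unfolding r_def by (simp add: powr_pow_eq)
      finally show ?thesis by simp
    qed
    finally show ?thesis .
  qed
  have "{0..T} \<times> {1<..} \<subseteq> (\<Union>k. R k)"
  proof
    fix p assume "p \<in> {0..T} \<times> {(1::real)<..}"
    then obtain t x where p: "p = (t, x)" "t \<in> {0..T}" "1 < x" by auto
    obtain k where "2^k < x \<and> x \<le> 2^Suc k" using up_shell_cover[OF p(3)] by blast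
    hence "p \<in> R k" using p unfolding R_def by simp
    thus "p \<in> (\<Union>k. R k)" by blast
  qed
  hence "emeasure (multistable_intensity \<beta>) ({0..T} \<times> {1<..}) \<le> emeasure (multistable_intensity \<beta>) (\<Union>k. R k)"
    by (intro emeasure_mono) (use Rsets in \<open>auto simp: intensity_eq\<close>)
  also have "\<dots> \<le> (\<Sum>k. emeasure (multistable_intensity \<beta>) (R k))"
    by (intro emeasure_subadditive_countably) (use Rsets in \<open>auto simp: intensity_eq\<close>)
  also have "\<dots> \<le> (\<Sum>k. ennreal (T * r^k))"
    by (intro suminf_le le summableI)
  also have "\<dots> < \<infinity>"
  proof -
    have "summable (\<lambda>k. T * r^k)" using r by (intro summable_mult summable_geometric) auto
    moreover have "\<And>k. 0 \<le> T * r^k" using r T by simp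
    ultimately have "(\<Sum>k. ennreal (T * r^k)) \<noteq> \<top>" by (rule ennreal_suminf_neq_top)
    thus ?thesis by (simp add: less_top)
  qed
  finally show ?thesis .
qed



lemma nu_low_sum:
  assumes cont: "continuous_on {0..} \<beta>" and rng: "\<forall>t\<ge>0. 0 < \<beta> t \<and> \<beta> t < 1" and T: "0 \<le> T"
  shows "(\<Sum>k. ennreal ((1/2)^k) * emeasure (multistable_intensity \<beta>) ({0..T} \<times> {((1::real)/2)^Suc k <.. (1/2)^k})) < \<infinity>"
proof -
  obtain t0 where t0: "t0 \<in> {0..T}" "\<forall>t\<in>{0..T}. \<beta> t \<le> \<beta> t0"
    using continuous_attains_sup[OF compact_Icc _ continuous_on_subset[OF cont], of 0 T] T by auto
  define b where "b = \<beta> t0"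
  have b: "b < 1" "0 < b" using t0 T rng by (auto simp: b_def)
  define r where "r = ((1::real)/2) powr (1 - b)"
  have r: "0 < r" "r < 1"
  proof -
    show "0 < r" by (simp add: r_def)
    have "((1::real)/2) powr (1 - b) < 1 powr (1 - b)" using b by (intro powr_less_mono2) auto
    thus "r < 1" by (simp add: r_def)
  qed
  define S where "S k = {0..T} \<times> {((1::real)/2)^Suc k <.. (1/2)^k}" for k :: nat
  have Ssets: "S k \<in> sets lborel" for k unfolding S_def by (intro box_sets) auto
  have le: "ennreal ((1/2)^k) * emeasure (multistable_intensity \<beta>) (S k) \<le> ennreal (2 * T * r * r^k)" for k
  proof -
    define y where "y = ((1::real)/2)^Suc k"
    have y1: "((1::real)/2)^Suc k \<le> 1" by (intro power_le_one) auto
    have y: "0 < y" "y \<le> 1" using y1 by (auto simp: y_def)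
    define C where "C = y powr (-b-1)"
    have "emeasure (multistable_intensity \<beta>) (S k) \<le> ennreal C * emeasure lborel (S k)"
    proof (rule nu_le[OF cont Ssets])
      fix p assume "p \<in> S k"
      then obtain t x where p: "p = (t, x)" "0 \<le> t" "t \<le> T" "y < x"
        unfolding S_def y_def by auto
      have bt: "\<beta> t \<le> b" "0 < \<beta> t" "\<beta> t < 1" using t0 p rng by (auto simp: b_def)
      have "\<beta> t * x powr (- \<beta> t - 1) \<le> 1 * x powr (- \<beta> t - 1)"
        using bt by (intro mult_right_mono) auto
      also have "\<dots> \<le> y powr (- \<beta> t - 1)" using bt y p(4) by (simp add: powr_mono2')
      also have "\<dots> \<le> C" unfolding C_def using bt y by (intro powr_mono') auto
      finally show "fb \<beta> p \<le> ennreal C" using p y by (auto simp: fb_def intro: ennreal_leI)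
    qed
    also have "emeasure lborel (S k) = ennreal (T * y)"
    proof -
      have "((1::real)/2)^Suc k \<le> (1/2)^k" by (intro power_decreasing) auto
      moreover have "((1::real)/2)^k - (1/2)^Suc k = y" by (simp add: y_def)
      ultimately show ?thesis
        unfolding S_def using T by (subst lborel_box) (auto simp: ennreal_mult[symmetric] y_def)
    qed
    also have "ennreal C * ennreal (T * y) = ennreal (C * (T * y))"
      using y T by (simp add: C_def ennreal_mult[symmetric])
    finally have 1: "ennreal ((1/2)^k) * emeasure (multistable_intensity \<beta>) (S k) \<le> ennreal ((1/2)^k) * ennreal (C * (T * y))"
      by (intro mult_left_mono) auto
    have "(1/2)^k * (C * (T * y)) = 2 * T * (y * y * C)"
      by (simp add: y_def field_simps)
    also have "y * y * C = y powr (1 - b)"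
    proof -
      have "y * y * C = y powr 1 * y powr 1 * y powr (-b-1)" using y by (simp add: C_def)
      also have "\<dots> = y powr (1 + 1 + (-b-1))" by (simp only: powr_add[symmetric])
      also have "y powr (1 + 1 + (-b-1)) = y powr (1 - b)" by (rule arg_cong[where f="\<lambda>e. y powr e"]) simp
      finally show ?thesis .
    qed
    also have "y powr (1 - b) = r^Suc k" unfolding y_def r_def by (rule powr_pow_eq) simp
    finally have 2: "(1/2)^k * (C * (T * y)) = 2 * T * r * r^k" by simp
    show ?thesis using 1 unfolding 2[symmetric] using y T
      by (simp add: ennreal_mult[symmetric] C_def)
  qed
  have "(\<Sum>k. ennreal ((1/2)^k) * emeasure (multistable_intensity \<beta>) (S k)) \<le> (\<Sum>k. ennreal (2 * T * r * r^k))"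
    by (intro suminf_le le summableI)
  also have "\<dots> < \<infinity>"
  proof -
    have "summable (\<lambda>k. 2 * T * r * r^k)" using r by (intro summable_mult summable_geometric) auto
    moreover have "\<And>k. 0 \<le> 2 * T * r * r^k" using r T by simp
    ultimately have "(\<Sum>k. ennreal (2 * T * r * r^k)) \<noteq> \<top>" by (rule ennreal_suminf_neq_top)
    thus ?thesis by (simp add: less_top)
  qed
  finally show ?thesis unfolding S_def .
qed

lemma nu_neg:
  assumes cont: "continuous_on {0..} \<beta>"
  shows "emeasure (multistable_intensity \<beta>) ({..<0} \<times> UNIV) = 0"
proof -
  have "emeasure (multistable_intensity \<beta>) ({..<0} \<times> UNIV) \<le> ennreal 0 * emeasure lborel ({..<(0::real)} \<times> (UNIV::real set))"
    by (rule nu_le[OF cont box_sets]) (auto simp: fb_def)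
  thus ?thesis by simp
qed



lemma infsum_le_nn:
  fixes f :: "'a \<Rightarrow> ennreal"
  shows "infsum f A \<le> (\<integral>\<^sup>+x. f x \<partial>count_space A)"
proof -
  have "infsum f A = (SUP F\<in>{F. finite F \<and> F\<subseteq>A}. sum f F)"
    by (rule nonneg_infsum_complete) simp
  also have "\<dots> \<le> (\<integral>\<^sup>+x. f x \<partial>count_space A)"
  proof (rule SUP_least)
    fix F assume F: "F \<in> {F. finite F \<and> F\<subseteq>A}"
    have "sum f F = (\<integral>\<^sup>+x. f x \<partial>count_space F)" using F by (simp add: nn_integral_count_space_finite)
    also have "\<dots> = (\<integral>\<^sup>+x. f x * indicator F x \<partial>count_space UNIV)"
      by (rule nn_integral_count_space_indicator) simp
    also have "\<dots> \<le> (\<integral>\<^sup>+x. f x * indicator A x \<partial>count_space UNIV)"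
      using F by (intro nn_integral_mono) (auto split: split_indicator)
    also have "\<dots> = (\<integral>\<^sup>+x. f x \<partial>count_space A)"
      by (rule nn_integral_count_space_indicator[symmetric]) simp
    finally show "sum f F \<le> (\<integral>\<^sup>+x. f x \<partial>count_space A)" .
  qed
  finally show ?thesis .
qed

lemma ennreal_term_le_suminf: "(f::nat\<Rightarrow>ennreal) k \<le> suminf f"
  using sum_le_suminf[OF summableI, of "{k}" f] by simp

lemma low_shell_cover:
  assumes "0 < (x::real)" "x \<le> 1" shows "\<exists>k::nat. ((1::real)/2)^Suc k < x \<and> x \<le> (1/2)^k"
proof -
  obtain n :: nat where n: "((1::real)/2)^n < x" using real_arch_pow_inv[of x "1/2"] assms by auto
  define m where "m = (LEAST m::nat. ((1::real)/2)^Suc m < x)"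
  have "((1::real)/2)^Suc n \<le> (1/2)^n" by (intro power_decreasing) auto
  hence "((1::real)/2)^Suc n < x" using n by linarith
  hence m1: "((1::real)/2)^Suc m < x" unfolding m_def by (rule LeastI)
  have "x \<le> (1/2)^m"
  proof (cases m)
    case 0 thus ?thesis using assms by simp
  next
    case (Suc j)
    have "\<not> ((1::real)/2)^Suc j < x" using not_less_Least[of j "\<lambda>m. ((1::real)/2)^Suc m < x"] Suc unfolding m_def by auto
    thus ?thesis using Suc by simp
  qed
  thus ?thesis using m1 by blast
qed

definition Dsum :: "(real \<times> real) set \<Rightarrow> real \<Rightarrow> ennreal" where
  "Dsum Q t = (\<Sum>\<^sub>\<infinity> p\<in>{p\<in>Q. fst p \<le> t}. ennreal (snd p))"

lemma Dsum_mono: "s \<le> t \<Longrightarrow> Dsum Q s \<le> Dsum Q t"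
  unfolding Dsum_def by (rule infsum_mono_neutral) (auto intro: nonneg_summable_on_complete)

lemma Dsum_strict:
  assumes "p \<in> Q" "s < fst p" "fst p \<le> t" "0 < snd p" "Dsum Q s < \<infinity>"
  shows "Dsum Q s < Dsum Q t"
proof -
  let ?g = "\<lambda>p. ennreal (snd p)"
  let ?A = "{p\<in>Q. fst p \<le> s}"
  have pA: "p \<notin> ?A"
  proof
    assume "p \<in> ?A" hence "fst p \<le> s" by simp
    with assms(2) show False by simp
  qed
  have "Dsum Q s < Dsum Q s + ?g p"
    using assms(4,5) ennreal_add_left_cancel_less[of "Dsum Q s" 0 "?g p"] by (simp add: top.not_eq_extremum)
  also have "\<dots> = infsum ?g (insert p ?A)"
    unfolding Dsum_def by (subst infsum_insert) (use assms(2) in \<open>auto intro: nonneg_summable_on_complete simp: add.commute\<close>)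
  also have "\<dots> \<le> Dsum Q t"
    unfolding Dsum_def using assms by (intro infsum_mono_neutral) (auto intro: nonneg_summable_on_complete)
  finally show ?thesis .
qed

lemma Dsum_fin:
  fixes Q :: "(real \<times> real) set" and T :: real
  assumes fin: "finite (Q \<inter> ({0..T} \<times> {1<..}))"
    and sm: "(\<Sum>k. ennreal ((1/2)^k) * emeasure (count_space UNIV) (Q \<inter> ({0..T} \<times> {((1::real)/2)^Suc k <.. (1/2)^k}))) < \<infinity>"
    and neg: "Q \<inter> ({..<0} \<times> UNIV) = {}"
  shows "Dsum Q T < \<infinity>"
proof -
  define R1 where "R1 = Q \<inter> ({0..T} \<times> {1<..})"
  define S where "S k = Q \<inter> ({0..T} \<times> {((1::real)/2)^Suc k <.. (1/2)^k})" for k :: nat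
  define A where "A = {p\<in>Q. fst p \<le> T}"
  have "Dsum Q T \<le> (\<integral>\<^sup>+p. ennreal (snd p) \<partial>count_space A)"
    unfolding Dsum_def A_def by (rule infsum_le_nn)
  also have "\<dots> = (\<integral>\<^sup>+p. ennreal (snd p) * indicator A p \<partial>count_space UNIV)"
    by (rule nn_integral_count_space_indicator) simp
  also have "\<dots> \<le> (\<integral>\<^sup>+p. ennreal (snd p) * indicator R1 p + (\<Sum>k. ennreal ((1/2)^k) * indicator (S k) p) \<partial>count_space UNIV)"
  proof (rule nn_integral_mono)
    fix p :: "real \<times> real"
    show "ennreal (snd p) * indicator A p \<le> ennreal (snd p) * indicator R1 p + (\<Sum>k. ennreal ((1/2)^k) * indicator (S k) p)"
    proof (cases "p \<in> A \<and> 0 < snd p")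
      case False
      hence z: "ennreal (snd p) * indicator A p = 0" by (auto simp: indicator_def ennreal_eq_0_iff)
      show ?thesis by (subst z) simp
    next
      case True
      hence pQ: "p \<in> Q" "fst p \<le> T" "0 < snd p" by (auto simp: A_def)
      have t0: "0 \<le> fst p"
      proof (rule ccontr)
        assume "\<not> 0 \<le> fst p"
        hence "p \<in> Q \<inter> ({..<0} \<times> UNIV)" using pQ by (cases p) auto
        thus False using neg by blast
      qed
      show ?thesis
      proof (cases "1 < snd p")
        case True
        hence "p \<in> R1" using pQ t0 by (cases p) (auto simp: R1_def)
        thus ?thesis using pQ by (simp add: A_def)
      next
        case False
        then obtain k where k: "((1::real)/2)^Suc k < snd p" "snd p \<le> (1/2)^k"
          using low_shell_cover[of "snd p"] pQ by auto
        hence pS: "p \<in> S k" using pQ t0 by (cases p) (auto simp: S_def)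
        have "ennreal (snd p) * indicator A p \<le> ennreal ((1/2)^k) * indicator (S k) p"
          using pS k pQ by (simp add: A_def ennreal_leI)
        also have "\<dots> \<le> (\<Sum>j. ennreal ((1/2)^j) * indicator (S j) p)"
          by (rule ennreal_term_le_suminf)
        finally show ?thesis by (simp add: add_increasing)
      qed
    qed
  qed
  also have "\<dots> = (\<integral>\<^sup>+p. ennreal (snd p) * indicator R1 p \<partial>count_space UNIV) + (\<integral>\<^sup>+p. (\<Sum>k. ennreal ((1/2)^k) * indicator (S k) p) \<partial>count_space UNIV)"
    by (rule nn_integral_add) auto
  also have "(\<integral>\<^sup>+p. (\<Sum>k. ennreal ((1/2)^k) * indicator (S k) p) \<partial>count_space UNIV) = (\<Sum>k. \<integral>\<^sup>+p. ennreal ((1/2)^k) * indicator (S k) p \<partial>count_space UNIV)"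
    by (rule nn_integral_suminf) auto
  also have "\<dots> = (\<Sum>k. ennreal ((1/2)^k) * emeasure (count_space UNIV) (S k))"
    by (subst nn_integral_cmult_indicator) auto
  also have "(\<integral>\<^sup>+p. ennreal (snd p) * indicator R1 p \<partial>count_space UNIV) = (\<Sum>p\<in>R1. ennreal (snd p) * indicator R1 p)"
    by (rule nn_integral_count_space') (use fin in \<open>auto simp: R1_def\<close>)
  also have "\<dots> < \<infinity>"
  proof -
    have "(\<Sum>p\<in>R1. ennreal (snd p) * indicator R1 p) \<noteq> \<top>"
      using fin by (simp add: R1_def ennreal_sum_eq_top ennreal_mult_eq_top_iff split: split_indicator)
    thus ?thesis by (simp add: less_top)
  qed
  finally show ?thesis using sm unfolding S_def by (simp add: less_top)
qed



theorem mainTheorem3: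
  fixes \<beta> :: "real \<Rightarrow> real" and M :: "'w measure" and P :: "'w \<Rightarrow> (real \<times> real) set"
  assumes "continuous_on {0..} \<beta>"
    and "\<forall>t\<ge>0. 0 < \<beta> t \<and> \<beta> t < 1"
    and "poisson_point_process M (multistable_intensity \<beta>) P"
  shows "AE \<omega> in M. strict_mono_on {0..} (\<lambda>t. multistable_subordinator P t \<omega>)"
proof -
  note cont = assms(1) and rng = assms(2)
  note h = assms(3)[unfolded poisson_point_process_def]
  have PS: "prob_space M" using h by blast
  interpret prob_space M by (rule PS)
  define \<nu> where "\<nu> = multistable_intensity \<beta>"
  have meas: "\<And>A. A \<in> sets lborel \<Longrightarrow> point_count P A \<in> borel_measurable M" using h by blast
  have pois: "\<And>A k. A \<in> sets lborel \<Longrightarrow> emeasure \<nu> A < \<infinity> \<Longrightarrow>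
     measure M {\<omega>\<in>space M. point_count P A \<omega> = of_nat k} = exp (- measure \<nu> A) * measure \<nu> A ^ k / fact k"
    using h unfolding \<nu>_def by blast
  have infae: "\<And>A. A \<in> sets lborel \<Longrightarrow> emeasure \<nu> A = \<infinity> \<Longrightarrow> AE \<omega> in M. point_count P A \<omega> = \<infinity>"
    using h unfolding \<nu>_def by blast
  have fin: "(\<integral>\<^sup>+\<omega>. point_count P A \<omega> \<partial>M) = emeasure \<nu> A \<and> (AE \<omega> in M. point_count P A \<omega> < \<infinity>)"
    if A: "A \<in> sets lborel" "emeasure \<nu> A < \<infinity>" for A
  proof -
    have e: "emeasure \<nu> A = ennreal (measure \<nu> A)"
      using A(2) by (intro emeasure_eq_ennreal_measure) (simp add: top.not_eq_extremum)
    show ?thesis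
      using poisson_nn_integral[OF PS meas[OF A(1)] measure_nonneg pois[OF A]] e by simp
  qed
  have zero: "AE \<omega> in M. point_count P A \<omega> = 0"
    if A: "A \<in> sets lborel" "emeasure \<nu> A = 0" for A
  proof -
    have m0: "measure \<nu> A = 0" using A(2) by (simp add: measure_def)
    have "prob {\<omega>\<in>space M. point_count P A \<omega> = of_nat 0} = 1"
      using pois[OF A(1), of 0] A(2) m0 by simp
    hence "AE \<omega> in M. \<omega> \<in> {\<omega>\<in>space M. point_count P A \<omega> = of_nat 0}" by (rule AE_prob_1)
    thus ?thesis by eventually_elim simp
  qed

  define X where "X = {q :: real \<times> real. fst q \<in> \<rat> \<and> snd q \<in> \<rat> \<and> 0 \<le> fst q \<and> fst q < snd q}"
  have cX: "countable X"
  proof (rule countable_subset)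
    show "X \<subseteq> \<rat> \<times> \<rat>" unfolding X_def by auto
    show "countable (\<rat> \<times> (\<rat> :: real set))" by (intro countable_SIGMA countable_rat)
  qed
  have F1: "AE \<omega> in M. \<forall>q\<in>X. \<exists>p\<in>P \<omega>. fst q < fst p \<and> fst p \<le> snd q \<and> 0 < snd p"
    unfolding AE_ball_countable[OF cX]
  proof
    fix q assume q: "q \<in> X"
    define U where "U = {fst q<..snd q} \<times> {(0::real)<..}"
    have U: "U \<in> sets lborel" unfolding U_def by (intro box_sets) auto
    have "emeasure \<nu> U = \<infinity>" unfolding \<nu>_def U_def using q
      by (intro nu_inf[OF cont rng]) (auto simp: X_def)
    from infae[OF U this] show "AE \<omega> in M. \<exists>p\<in>P \<omega>. fst q < fst p \<and> fst p \<le> snd q \<and> 0 < snd p"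
    proof eventually_elim
      case (elim \<omega>)
      have "P \<omega> \<inter> U \<noteq> {}"
      proof
        assume "P \<omega> \<inter> U = {}"
        thus False using elim by (simp add: point_count_def)
      qed
      then obtain p where p1: "p \<in> P \<omega>" and p2: "p \<in> U" by blast
      from p2 have "fst q < fst p \<and> fst p \<le> snd q \<and> 0 < snd p" unfolding U_def by (auto simp: mem_Times_iff)
      thus ?case using p1 by blast
    qed
  qed

  have F2: "AE \<omega> in M. \<forall>n::nat. Dsum (P \<omega>) (real n) < \<infinity>"
    unfolding AE_all_countable
  proof
    fix n :: nat
    define T where "T = real n"
    have T: "0 \<le> T" by (simp add: T_def)
    define R1 where "R1 = {0..T} \<times> {(1::real)<..}"
    define S where "S k = {0..T} \<times> {((1::real)/2)^Suc k <.. (1/2)^k}" for k :: nat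
    define Z where "Z = {..<(0::real)} \<times> (UNIV :: real set)"
    have R1s: "R1 \<in> sets lborel" unfolding R1_def by (intro box_sets) auto
    have Ss: "S k \<in> sets lborel" for k unfolding S_def by (intro box_sets) auto
    have Zs: "Z \<in> sets lborel" unfolding Z_def by (intro box_sets) auto
    have a1: "AE \<omega> in M. point_count P R1 \<omega> < \<infinity>"
      using fin[OF R1s] nu_up_fin[OF cont rng T] unfolding \<nu>_def R1_def by blast
    have a3: "AE \<omega> in M. point_count P Z \<omega> = 0"
      using zero[OF Zs] nu_neg[OF cont] unfolding \<nu>_def Z_def by blast
    have sumfin: "(\<Sum>k. ennreal ((1/2)^k) * emeasure \<nu> (S k)) < \<infinity>"
      using nu_low_sum[OF cont rng T] unfolding \<nu>_def S_def .
    have Sfin: "emeasure \<nu> (S k) < \<infinity>" for k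
    proof -
      have "ennreal ((1/2)^k) * emeasure \<nu> (S k) \<le> (\<Sum>k. ennreal ((1/2)^k) * emeasure \<nu> (S k))"
        by (rule ennreal_term_le_suminf)
      hence "ennreal ((1/2)^k) * emeasure \<nu> (S k) \<noteq> \<top>" using sumfin by (auto simp: top_unique)
      thus ?thesis by (auto simp: ennreal_mult_eq_top_iff top.not_eq_extremum)
    qed
    have "(\<integral>\<^sup>+\<omega>. (\<Sum>k. ennreal ((1/2)^k) * point_count P (S k) \<omega>) \<partial>M) = (\<Sum>k. \<integral>\<^sup>+\<omega>. ennreal ((1/2)^k) * point_count P (S k) \<omega> \<partial>M)"
      by (rule nn_integral_suminf) (use meas[OF Ss] in auto)
    also have "\<dots> = (\<Sum>k. ennreal ((1/2)^k) * emeasure \<nu> (S k))"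
      by (intro suminf_cong) (simp add: nn_integral_cmult meas[OF Ss] fin[OF Ss Sfin])
    finally have "(\<integral>\<^sup>+\<omega>. (\<Sum>k. ennreal ((1/2)^k) * point_count P (S k) \<omega>) \<partial>M) \<noteq> \<infinity>"
      using sumfin by simp
    hence a2: "AE \<omega> in M. (\<Sum>k. ennreal ((1/2)^k) * point_count P (S k) \<omega>) \<noteq> \<infinity>"
      by (intro nn_integral_PInf_AE) (use meas[OF Ss] in auto)
    show "AE \<omega> in M. Dsum (P \<omega>) (real n) < \<infinity>"
      using a1 a2 a3
    proof eventually_elim
      case (elim \<omega>)
      show ?case unfolding T_def[symmetric]
      proof (rule Dsum_fin)
        show "finite (P \<omega> \<inter> ({0..T} \<times> {1<..}))"
        proof (rule ccontr)
          assume "infinite (P \<omega> \<inter> ({0..T} \<times> {1<..}))"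
          hence "point_count P R1 \<omega> = \<infinity>" unfolding point_count_def R1_def by simp
          thus False using elim(1) by simp
        qed
        show "(\<Sum>k. ennreal ((1/2)^k) * emeasure (count_space UNIV) (P \<omega> \<inter> ({0..T} \<times> {((1::real)/2)^Suc k <.. (1/2)^k}))) < \<infinity>"
          using elim(2) unfolding point_count_def S_def by (simp add: top.not_eq_extremum)
        show "P \<omega> \<inter> ({..<0} \<times> UNIV) = {}"
          using elim(3) unfolding point_count_def Z_def by (simp add: emeasure_count_space_eq_0)
      qed
    qed
  qed

  show ?thesis
    using F1 F2
  proof eventually_elim
    case (elim \<omega>)
    have eqD: "multistable_subordinator P t \<omega> = Dsum (P \<omega>) t" for t
      by (simp add: multistable_subordinator_def Dsum_def)
    show ?case unfolding strict_mono_on_def eqD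
    proof (intro allI impI)
      fix r s :: real assume rs: "r \<in> {0..} \<and> s \<in> {0..} \<and> r < s"
      obtain q1 where q1: "q1 \<in> \<rat>" "r < q1" "q1 < s" using Rats_dense_in_real rs by blast
      obtain q2 where q2: "q2 \<in> \<rat>" "q1 < q2" "q2 < s" using Rats_dense_in_real q1 by blast
      have "(q1, q2) \<in> X" using q1 q2 rs unfolding X_def by auto
      then obtain p where p: "p \<in> P \<omega>" "q1 < fst p" "fst p \<le> q2" "0 < snd p" using elim(1) by fastforce
      have "Dsum (P \<omega>) r \<le> Dsum (P \<omega>) (real (nat \<lceil>r\<rceil>))" by (intro Dsum_mono real_nat_ceiling_ge)
      also have "\<dots> < \<infinity>" using elim(2) by blast
      finally have "Dsum (P \<omega>) r < \<infinity>" .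
      thus "Dsum (P \<omega>) r < Dsum (P \<omega>) s"
        using p q1 q2 by (intro Dsum_strict[of p]) auto
    qed
  qed
qed


end
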